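(* In the Simpler Lazy Set algorithm, let $(S,e,T)$ be an $\mathrm{RM}$ step with $\chi(e)=1$ that removes the address $d=\mathrm{adr}(e)$ from the main branch of $S$. Let $c$ be the address on the main branch of $S$ with $\mathrm{Next}^S(c)=d$, and let $d'=\mathrm{Next}^S(d)$. Let $a$ be any active address of $S$, let $Q$ be the path from $a$ to $T$ in $S$, and let $R$ be the path from $a$ to $T$ in $T$. Then either $R=Q$ or $R=Q\setminus\{d\}$. More precisely: (1) if $c$ is not on $Q$ then $R=Q$; (2) if $c$ is on $Q$ then $d$ and $d'$ are on $Q$ and $R=Q\setminus\{d\}$.
   Context: Simpler Lazy Set algorithm. Fix a countably infinite set $A$ of addresses containing two distinguished addresses $\mathsf H$ (head) and $\mathsf T$ (tail); let $\mathrm{Number}=\mathbb N\cup\{-1,\infty\}$. A state $S$ consists of a set $\mathrm{Active}^S\subseteq A$ of active addresses, a function $\mathrm{Next}^S:\mathrm{Active}^S\setminus\{\mathsf T\}\to A$, a function $\mathrm{Val}^S:\mathrm{Active}^S\to\mathrm{Number}$, and for each process $p$ values $PC_p$ (a line number among $0,1,2,3.1,\dots,3.5$), $x_p\in\mathbb N$, $\mathrm{curr}_p\in A$ and $\mathrm{status}_p\in\{0,1,f\}$. $S$ is normal if $\mathrm{Active}^S$ is finite, $\mathsf H,\mathsf T$ are active with values $-1,\infty$, every other active address has value in $\mathbb N$, and for every active $a\neq\mathsf T$, $\mathrm{Next}(a)$ is active and $\mathrm{Val}(a)<\mathrm{Val}(\mathrm{Next}(a))$. A path is a sequence $a_1,\dots,a_m$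 ($m>1$) of active addresses with $\mathrm{Next}(a_i)=a_{i+1}$; in a normal state every active address lies on a unique path to $\mathsf T$; the main branch is the path from $\mathsf H$ to $\mathsf T$. An $\mathrm{RM}(x)$ step $(S,e,T)$ of process $p$ (enabled on a normal $S$ with $PC_p^S=2$, $x=x_p$, resulting in $PC_p^T=0$): if the main branch of $S$ contains an address $cu$ with value $x$, let $pred$ be the address on the main branch with $\mathrm{Next}^S(pred)=cu$; then $T$ agrees with $S$ except $\mathrm{Next}^T(pred)=\mathrm{Next}^S(cu)$, and $\chi(e)=1$, $\mathrm{adr}(e)=cu$ ($e$ removes $cu$ from the main branch). Otherwise $T=S$ except for $PC_p$, and $\chi(e)=0$. *)

theory Defs
  imports Main "HOL-Library.Countable"
begin

datatype number = NegOne | Fin nat | Infty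

fun num_less :: "number \<Rightarrow> number \<Rightarrow> bool" where
  "num_less NegOne NegOne = False"
| "num_less NegOne _ = True"
| "num_less (Fin _) NegOne = False"
| "num_less (Fin m) (Fin n) = (m < n)"
| "num_less (Fin _) Infty = True"
| "num_less Infty _ = False"

datatype line = L0 | L1 | L2 | L3_1 | L3_2 | L3_3 | L3_4 | L3_5

datatype status = St0 | St1 | Stf

text \<open>A state; Next and Val are total functions of which only the values on
  Active - {tail} (resp. Active) are meaningful.\<close>
record ('a, 'p) state =
  Active :: "'a set"
  Next   :: "'a \<Rightarrow> 'a"
  Val    :: "'a \<Rightarrow> number"
  PC     :: "'p \<Rightarrow> line"
  xv     :: "'p \<Rightarrow> nat"
  curr   :: "'p \<Rightarrow> 'a"
  status :: "'p \<Rightarrow> status"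

definition normal :: "'a \<Rightarrow> 'a \<Rightarrow> ('a, 'p) state \<Rightarrow> bool" where
  "normal H T S \<longleftrightarrow>
     finite (Active S) \<and> H \<in> Active S \<and> T \<in> Active S \<and>
     Val S H = NegOne \<and> Val S T = Infty \<and>
     (\<forall>a \<in> Active S - {H, T}. \<exists>n. Val S a = Fin n) \<and>
     (\<forall>a \<in> Active S - {T}. Next S a \<in> Active S \<and> num_less (Val S a) (Val S (Next S a)))"

text \<open>A path a_1,...,a_m (m > 1) of active addresses with Next(a_i) = a_(i+1);
  Next is only defined on non-tail addresses, so a_i \<noteq> T for i < m.\<close>
definition is_path :: "'a \<Rightarrow> ('a, 'p) state \<Rightarrow> 'a list \<Rightarrow> bool" where
  "is_path T S xs \<longleftrightarrow>
     length xs > 1 \<and> set xs \<subseteq> Active S \<and>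
     (\<forall>i. Suc i < length xs \<longrightarrow> xs ! i \<noteq> T \<and> Next S (xs ! i) = xs ! Suc i)"

definition path_to_tail :: "'a \<Rightarrow> ('a, 'p) state \<Rightarrow> 'a \<Rightarrow> 'a list \<Rightarrow> bool" where
  "path_to_tail T S a xs \<longleftrightarrow> is_path T S xs \<and> hd xs = a \<and> last xs = T"

definition main_branch :: "'a \<Rightarrow> 'a \<Rightarrow> ('a, 'p) state \<Rightarrow> 'a list \<Rightarrow> bool" where
  "main_branch H T S xs \<longleftrightarrow> path_to_tail T S H xs"

record ('a, 'p) event =
  proc :: 'p
  chi  :: nat
  adr  :: 'a

definition RM_step :: "'a \<Rightarrow> 'a \<Rightarrow> ('a, 'p) state \<Rightarrow> ('a, 'p) event \<Rightarrow> ('a, 'p) state \<Rightarrow> bool" where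
  "RM_step H T S e S' \<longleftrightarrow>
     (let p = proc e; x = xv S p in
      normal H T S \<and> PC S p = L2 \<and>
      ((\<exists>M cu pred. main_branch H T S M \<and> cu \<in> set M \<and> Val S cu = Fin x \<and>
          pred \<in> set M \<and> pred \<noteq> T \<and> Next S pred = cu \<and>
          S' = S\<lparr>Next := (Next S)(pred := Next S cu), PC := (PC S)(p := L0)\<rparr> \<and>
          chi e = 1 \<and> adr e = cu)
       \<or>
       ((\<forall>M. main_branch H T S M \<longrightarrow> (\<forall>cu \<in> set M. Val S cu \<noteq> Fin x)) \<and>
          S' = S\<lparr>PC := (PC S)(p := L0)\<rparr> \<and> chi e = 0)))"

end

theory Submission
  imports Defs
begin

fun chn :: "('a \<Rightarrow> 'a) \<Rightarrow> 'a \<Rightarrow> 'a list \<Rightarrow> bool" where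
  "chn Nx T [] = False"
| "chn Nx T [x] = (x = T)"
| "chn Nx T (x # y # zs) = (x \<noteq> T \<and> Nx x = y \<and> chn Nx T (y # zs))"

lemma allSuc: "(\<forall>i. P i) = (P 0 \<and> (\<forall>j. P (Suc j)))"
  by (metis not0_implies_Suc)

lemma chn_iff: "chn Nx T xs \<longleftrightarrow> xs \<noteq> [] \<and> last xs = T \<and>
   (\<forall>i. Suc i < length xs \<longrightarrow> xs ! i \<noteq> T \<and> Nx (xs ! i) = xs ! Suc i)"
proof (induction Nx T xs rule: chn.induct)
  case (3 Nx T x y zs)
  show ?case
    apply (subst allSuc)
    using 3 by auto
qed auto

lemma path_chn: "path_to_tail T S a xs \<Longrightarrow> chn (Next S) T xs \<and> hd xs = a \<and> set xs \<subseteq> Active S"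
  unfolding path_to_tail_def is_path_def chn_iff by auto

lemma chn_uniq: "chn Nx T xs \<Longrightarrow> chn Nx T ys \<Longrightarrow> hd xs = hd ys \<Longrightarrow> xs = ys"
proof (induction Nx T xs arbitrary: ys rule: chn.induct)
  case (2 Nx T x)
  then show ?case by (cases "(Nx,T,ys)" rule: chn.cases) auto
next
  case (3 Nx T x y zs)
  then show ?case
    apply (cases "(Nx,T,ys)" rule: chn.cases)
      apply auto
    by (metis list.sel(1) list.inject)
qed auto

lemma chn_next: "chn Nx T (y # zs) \<Longrightarrow> c \<in> set (y # zs) \<Longrightarrow> c \<noteq> T \<Longrightarrow> Nx c \<in> set zs"
proof (induction zs arbitrary: y)
  case (Cons w zs)
  then show ?case by (cases "c = y") auto
qed auto

lemma chn_upd: "c \<notin> set xs \<Longrightarrow> chn (Nx(c := v)) T xs = chn Nx T xs"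
  by (induction Nx T xs rule: chn.induct) auto

lemma num_less_trans: "num_less a b \<Longrightarrow> num_less b c \<Longrightarrow> num_less a c"
  by (cases a; cases b; cases c) auto

lemma num_less_irrefl: "\<not> num_less a a"
  by (cases a) auto

lemma chn_sorted: "normal H T S \<Longrightarrow> chn (Next S) T xs \<Longrightarrow> set xs \<subseteq> Active S \<Longrightarrow>
  sorted_wrt (\<lambda>u v. num_less (Val S u) (Val S v)) xs"
proof (induction "Next S" T xs rule: chn.induct)
  case (3 T x y zs)
  have xy: "num_less (Val S x) (Val S y)" using 3 unfolding normal_def by auto
  have "sorted_wrt (\<lambda>u v. num_less (Val S u) (Val S v)) (y # zs)" using 3 by auto
  then show ?case using xy num_less_trans by auto
qed auto

lemma chn_distinct: "normal H T S \<Longrightarrow> chn (Next S) T xs \<Longrightarrow> set xs \<subseteq> Active S \<Longrightarrow> distinct xs"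
proof -
  assume a: "normal H T S" "chn (Next S) T xs" "set xs \<subseteq> Active S"
  have "sorted_wrt (\<lambda>u v. num_less (Val S u) (Val S v)) xs" using chn_sorted[OF a] .
  then show ?thesis
    by (induction xs) (auto simp: num_less_irrefl)
qed

lemma chn_inj: "chn Nx T xs \<Longrightarrow> distinct xs \<Longrightarrow> u \<in> set xs \<Longrightarrow> v \<in> set xs \<Longrightarrow> u \<noteq> T \<Longrightarrow> v \<noteq> T
  \<Longrightarrow> Nx u = Nx v \<Longrightarrow> u = v"
proof (induction Nx T xs rule: chn.induct)
  case (3 Nx T x y zs)
  show ?case
  proof (cases "u = x \<or> v = x")
    case True
    then show ?thesis
      using 3 chn_next[of Nx T y zs u] chn_next[of Nx T y zs v] by auto
  next
    case False
    then show ?thesis using 3 by auto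
  qed
qed auto

lemma chn_filter: "chn Nx T xs \<Longrightarrow> distinct xs \<Longrightarrow> c \<in> set xs \<Longrightarrow> c \<noteq> T \<Longrightarrow> Nx c = d \<Longrightarrow> d \<noteq> T
  \<Longrightarrow> chn (Nx(c := Nx d)) T (filter (\<lambda>y. y \<noteq> d) xs)"
proof (induction Nx T xs rule: chn.induct)
  case (3 Nx T x y zs)
  show ?case
  proof (cases "x = c")
    case True
    then have yd: "y = d" using 3 by auto
    obtain w zs' where zs: "zs = w # zs'" using 3 yd by (cases zs) auto
    have cw: "c \<noteq> d" "c \<notin> set zs" "d \<notin> set zs" using 3 True yd by auto
    have fe: "filter (\<lambda>y. y \<noteq> d) (x # y # zs) = c # zs"
      using True yd cw by (simp add: filter_id_conv) (metis)
    have c1: "chn (Nx(c := Nx d)) T zs"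
      using chn_upd[OF cw(2)] 3 yd zs by auto
    have c2: "w = Nx d" using 3 yd zs by auto
    have "chn (Nx(c := Nx d)) T (c # zs)" using c1 c2 zs 3(6) True 3(5) by simp
    then show ?thesis using fe by (simp only: filter.simps)
  next
    case False
    then have cin: "c \<in> set (y # zs)" using 3 by auto
    have dz: "d \<in> set zs" using chn_next[of Nx T y zs c] 3 cin by auto
    have xd: "x \<noteq> d" "y \<noteq> d" using 3 dz by auto
    have ih: "chn (Nx(c := Nx d)) T (filter (\<lambda>y. y \<noteq> d) (y # zs))"
      using 3(1)[OF _ _ cin 3(5,6,7)] 3(2,3) by (simp add: fun_upd_def)
    have fe: "filter (\<lambda>y. y \<noteq> d) (x # y # zs) = x # y # filter (\<lambda>y. y \<noteq> d) zs"
      using xd by simp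
    have fe2: "filter (\<lambda>y. y \<noteq> d) (y # zs) = y # filter (\<lambda>y. y \<noteq> d) zs"
      using xd by simp
    have "(Nx(c := Nx d)) x = y" using False 3(2) by simp
    then have "chn (Nx(c := Nx d)) T (x # y # filter (\<lambda>y. y \<noteq> d) zs)"
      using ih fe2 3(2) by (simp only: chn.simps) simp
    then show ?thesis using fe by (simp only: filter.simps)
  qed
qed auto

theorem lemma4p6:
  fixes H T :: "'a::countable" and S S' :: "('a, 'p) state" and e :: "('a, 'p) event"
    and c d a :: 'a and M Q R :: "'a list"
  assumes "infinite (UNIV :: 'a set)"
    and step: "RM_step H T S e S'"
    and chi: "chi e = 1"
    and d: "d = adr e"
    and M: "main_branch H T S M"
    and cM: "c \<in> set M" and cT: "c \<noteq> T" and cd: "Next S c = d"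
    and a: "a \<in> Active S"
    and Q: "path_to_tail T S a Q"
    and R: "path_to_tail T S' a R"
  shows "(R = Q \<or> R = filter (\<lambda>y. y \<noteq> d) Q)
       \<and> (c \<notin> set Q \<longrightarrow> R = Q)
       \<and> (c \<in> set Q \<longrightarrow> d \<in> set Q \<and> Next S d \<in> set Q \<and> R = filter (\<lambda>y. y \<noteq> d) Q)"
proof -
  have nS: "normal H T S" using step unfolding RM_step_def Let_def by auto
  obtain M' pred where M': "main_branch H T S M'" and dM': "d \<in> set M'"
    and vd: "Val S d = Fin (xv S (proc e))" and pM: "pred \<in> set M'" and pT: "pred \<noteq> T"
    and pd: "Next S pred = d"
    and S': "S' = S\<lparr>Next := (Next S)(pred := Next S d), PC := (PC S)(proc e := L0)\<rparr>"
    using step chi d unfolding RM_step_def Let_def by auto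
  have dT: "d \<noteq> T" using vd nS unfolding normal_def by auto
  have cM1: "chn (Next S) T M" "hd M = H" "set M \<subseteq> Active S"
    using path_chn[OF M[unfolded main_branch_def]] by auto
  have cM2: "chn (Next S) T M'" "hd M' = H"
    using path_chn[OF M'[unfolded main_branch_def]] by auto
  have MM: "M' = M" using chn_uniq cM1 cM2 by metis
  have dM: "distinct M" using chn_distinct[OF nS cM1(1) cM1(3)] .
  have pc: "pred = c" using chn_inj[OF cM1(1) dM] pM MM cM pT cT pd cd by metis
  have NS': "Next S' = (Next S)(c := Next S d)" using S' pc by simp
  have cQ: "chn (Next S) T Q" "hd Q = a" "set Q \<subseteq> Active S" using path_chn[OF Q] by auto
  have dQ: "distinct Q" using chn_distinct[OF nS cQ(1) cQ(3)] .
  have cR: "chn (Next S') T R" "hd R = a" using path_chn[OF R] by auto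
  show ?thesis
  proof (cases "c \<in> set Q")
    case False
    have "chn (Next S') T Q" using NS' chn_upd[OF False] cQ by simp
    then have "R = Q" using chn_uniq cR cQ by metis
    then show ?thesis using False by simp
  next
    case True
    obtain y zs where Qy: "Q = y # zs" using cQ by (cases Q) auto
    have dz: "d \<in> set zs" using chn_next[of "Next S" T y zs c] cQ Qy True cT cd by auto
    have dQ': "d \<in> set Q" using dz Qy by auto
    have ndQ: "Next S d \<in> set Q" using chn_next[of "Next S" T y zs d] cQ Qy dQ' dT by auto
    have yd: "y \<noteq> d" using dQ Qy dz by auto
    have f: "chn (Next S') T (filter (\<lambda>y. y \<noteq> d) Q)"
      using chn_filter[OF cQ(1) dQ True cT cd dT] NS' by simp
    have "hd (filter (\<lambda>y. y \<noteq> d) Q) = a" using Qy yd cQ by simp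
    then have "R = filter (\<lambda>y. y \<noteq> d) Q" using chn_uniq cR f by metis
    then show ?thesis using dQ' ndQ True by simp
  qed
qed

end
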